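(* Let $G$ be a finite subgroup of $O(d)$ and $p\ge1$ an integer such that every $G$-invariant homogeneous polynomial of degree $2p$ on $\mathbb{R}^d$ is a scalar multiple of $|x|^{2p}$. Then there is a homogeneous symmetric polynomial $F_p$ of degree $p$ in $d$ variables such that for every real matrix $T$ with $d$ columns (possibly rectangular) and every $x\in\mathbb{R}^d$, $$\frac{1}{|G|}\sum_{U\in G}|TUx|^{2p}=F_p(s^2(T))\,|x|^{2p},$$ where $s^2(T)$ denotes the multiset of eigenvalues of $T^\dagger T$ (squares of the singular values of $T$).
   Context: $T^\dagger$ is the transpose of $T$. *)

theory Defs
  imports "HOL-Analysis.Analysis"
begin

definition homog_poly :: "nat \<Rightarrow> (real^'d \<Rightarrow> real) \<Rightarrow> bool" where
  "homog_poly k f \<longleftrightarrow>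
     (\<exists>c :: ('d \<Rightarrow> nat) \<Rightarrow> real.
        \<forall>x. f x = (\<Sum>\<alpha> \<in> {\<alpha>. sum \<alpha> UNIV = k}. c \<alpha> * (\<Prod>i\<in>UNIV. (x $ i) ^ \<alpha> i)))"

definition symmetric_fun :: "(real^'d \<Rightarrow> real) \<Rightarrow> bool" where
  "symmetric_fun F \<longleftrightarrow> (\<forall>\<sigma> v. \<sigma> permutes (UNIV :: 'd set) \<longrightarrow> F (\<chi> i. v $ \<sigma> i) = F v)"

definition finite_orth_group :: "(real^'d^'d) set \<Rightarrow> bool" where
  "finite_orth_group G \<longleftrightarrow> finite G \<and> (\<forall>U\<in>G. orthogonal_matrix U) \<and> mat 1 \<in> G
     \<and> (\<forall>U\<in>G. \<forall>V\<in>G. U ** V \<in> G) \<and> (\<forall>U\<in>G. transpose U \<in> G)"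

text \<open>A real n x d matrix T is given by its rows T 0, ..., T (n-1) in R^d.
  rect_norm n T y is the Euclidean norm of T y in R^n.\<close>
definition rect_norm :: "nat \<Rightarrow> (nat \<Rightarrow> real^'d) \<Rightarrow> real^'d \<Rightarrow> real" where
  "rect_norm n T y = sqrt (\<Sum>k<n. (T k \<bullet> y)\<^sup>2)"

definition gram :: "nat \<Rightarrow> (nat \<Rightarrow> real^'d) \<Rightarrow> real^'d^'d" where
  "gram n T = (\<chi> i j. \<Sum>k<n. T k $ i * T k $ j)"

text \<open>lam lists the eigenvalues of A with (algebraic) multiplicity, i.e. the
  characteristic polynomial of A is the product of (t - lam_i).\<close>
definition is_eigenvalue_list :: "real^'d^'d \<Rightarrow> real^'d \<Rightarrow> bool" where
  "is_eigenvalue_list A lam \<longleftrightarrow>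
     (\<forall>t. det (t *\<^sub>R mat 1 - A) = (\<Prod>i\<in>UNIV. t - lam $ i))"

end

theory Submission
  imports Defs "HOL-Computational_Algebra.Polynomial"
begin


definition mnm :: "('d \<Rightarrow> nat) \<Rightarrow> real^'d \<Rightarrow> real" where
  "mnm \<alpha> x = (\<Prod>i\<in>UNIV. (x $ i) ^ \<alpha> i)"

lemma fin_deg: "finite {\<alpha>::'d::finite \<Rightarrow> nat. sum \<alpha> UNIV = k}"
proof (rule finite_subset[OF _ finite_PiE[of UNIV "\<lambda>_. {..k}"]])
  show "{\<alpha>::'d::finite \<Rightarrow> nat. sum \<alpha> UNIV = k} \<subseteq> PiE UNIV (\<lambda>_. {..k})"
    by (auto simp: PiE_def extensional_def intro!: member_le_sum)
qed auto

lemma homog_poly_alt: "homog_poly k f \<longleftrightarrow> (\<exists>c. \<forall>x. f x = (\<Sum>\<alpha>\<in>{\<alpha>. sum \<alpha> UNIV = k}. c \<alpha> * mnm \<alpha> x))"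
  unfolding homog_poly_def mnm_def by simp

lemma homog_poly_zero: "homog_poly k (\<lambda>x. 0)"
  unfolding homog_poly_alt by (rule exI[of _ "\<lambda>_. 0"]) simp

lemma homog_poly_add: "homog_poly k f \<Longrightarrow> homog_poly k g \<Longrightarrow> homog_poly k (\<lambda>x. f x + g x)"
  unfolding homog_poly_alt
proof (elim exE)
  fix c d assume c: "\<forall>x. f x = (\<Sum>\<alpha>\<in>{\<alpha>. sum \<alpha> UNIV = k}. c \<alpha> * mnm \<alpha> x)"
    and d: "\<forall>x. g x = (\<Sum>\<alpha>\<in>{\<alpha>. sum \<alpha> UNIV = k}. d \<alpha> * mnm \<alpha> x)"
  show "\<exists>e. \<forall>x. f x + g x = (\<Sum>\<alpha>\<in>{\<alpha>. sum \<alpha> UNIV = k}. e \<alpha> * mnm \<alpha> x)"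
    by (rule exI[of _ "\<lambda>\<alpha>. c \<alpha> + d \<alpha>"]) (simp add: c d sum.distrib distrib_right)
qed

lemma homog_poly_scale: "homog_poly k f \<Longrightarrow> homog_poly k (\<lambda>x. a * f x)"
  unfolding homog_poly_alt
proof (elim exE)
  fix c assume c: "\<forall>x. f x = (\<Sum>\<alpha>\<in>{\<alpha>. sum \<alpha> UNIV = k}. c \<alpha> * mnm \<alpha> x)"
  show "\<exists>e. \<forall>x. a * f x = (\<Sum>\<alpha>\<in>{\<alpha>. sum \<alpha> UNIV = k}. e \<alpha> * mnm \<alpha> x)"
    by (rule exI[of _ "\<lambda>\<alpha>. a * c \<alpha>"]) (simp add: c sum_distrib_left mult.assoc)
qed

lemma homog_poly_const: "homog_poly 0 (\<lambda>x. a)"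
proof -
  have "{\<alpha>::'a\<Rightarrow>nat. sum \<alpha> UNIV = 0} = {\<lambda>_. 0}" by auto
  then show ?thesis unfolding homog_poly_alt
    by (auto simp: mnm_def intro!: exI[of _ "\<lambda>_. a"])
qed

lemma homog_poly_var: "homog_poly 1 (\<lambda>x::real^'d. x $ i)"
proof -
  let ?d = "\<lambda>j. if j = i then 1 else (0::nat)"
  have mem: "?d \<in> {\<alpha>::'d\<Rightarrow>nat. sum \<alpha> UNIV = 1}" by (simp add: sum.delta)
  have m: "mnm ?d x = x $ i" for x :: "real^'d"
    unfolding mnm_def by (simp add: if_distrib prod.delta cong: if_cong)
  show ?thesis unfolding homog_poly_alt
  proof (rule exI[of _ "\<lambda>\<alpha>. if \<alpha> = ?d then 1 else 0"], rule allI)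
    fix x :: "real^'d"
    have "(\<Sum>\<alpha>\<in>{\<alpha>::'d\<Rightarrow>nat. sum \<alpha> UNIV = 1}. (if \<alpha> = ?d then 1 else 0) * mnm \<alpha> x)
       = (\<Sum>\<alpha>\<in>{\<alpha>::'d\<Rightarrow>nat. sum \<alpha> UNIV = 1}. if \<alpha> = ?d then mnm \<alpha> x else 0)"
      by (rule sum.cong) auto
    also have "\<dots> = mnm ?d x" using mem fin_deg[where 'd='d and k=1] by (simp only: sum.delta) simp
    finally show "x $ i = (\<Sum>\<alpha>\<in>{\<alpha>::'d\<Rightarrow>nat. sum \<alpha> UNIV = 1}. (if \<alpha> = ?d then 1 else 0) * mnm \<alpha> x)"
      using m by simp
  qed
qed

lemma homog_poly_mult:
  assumes "homog_poly k f" "homog_poly l g"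
  shows "homog_poly (k + l) (\<lambda>x. f x * g x)"
proof -
  let ?K = "{\<alpha>::'d\<Rightarrow>nat. sum \<alpha> UNIV = k}" and ?L = "{\<alpha>::'d\<Rightarrow>nat. sum \<alpha> UNIV = l}"
    and ?M = "{\<alpha>::'d\<Rightarrow>nat. sum \<alpha> UNIV = k + l}"
  obtain c where c: "\<And>x. f x = (\<Sum>\<alpha>\<in>?K. c \<alpha> * mnm \<alpha> x)" using assms(1) unfolding homog_poly_alt by blast
  obtain d where d: "\<And>x. g x = (\<Sum>\<alpha>\<in>?L. d \<alpha> * mnm \<alpha> x)" using assms(2) unfolding homog_poly_alt by blast
  let ?h = "\<lambda>p::('d\<Rightarrow>nat)\<times>('d\<Rightarrow>nat). \<lambda>i. fst p i + snd p i"
  define e where "e \<gamma> = (\<Sum>p\<in>{p \<in> ?K \<times> ?L. ?h p = \<gamma>}. c (fst p) * d (snd p))" for \<gamma>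
  have mm: "mnm (\<lambda>i. a i + b i) x = mnm a x * mnm b x" for a b and x :: "real^'d"
    unfolding mnm_def by (simp add: power_add prod.distrib)
  have "f x * g x = (\<Sum>\<alpha>\<in>?M. e \<alpha> * mnm \<alpha> x)" for x
  proof -
    have "f x * g x = (\<Sum>p\<in>?K \<times> ?L. c (fst p) * d (snd p) * mnm (?h p) x)"
      unfolding c d sum_product sum.cartesian_product
      by (rule sum.cong) (auto simp: mm)
    also have "\<dots> = (\<Sum>\<gamma>\<in>?M. \<Sum>p\<in>{p \<in> ?K \<times> ?L. ?h p = \<gamma>}. c (fst p) * d (snd p) * mnm (?h p) x)"
      by (rule sum.group[symmetric]) (auto simp: fin_deg sum.distrib)
    also have "\<dots> = (\<Sum>\<alpha>\<in>?M. e \<alpha> * mnm \<alpha> x)"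
      unfolding e_def sum_distrib_right
      by (intro sum.cong refl) auto
    finally show ?thesis .
  qed
  then show ?thesis unfolding homog_poly_alt by blast
qed

lemma homog_poly_sum:
  assumes "finite S" "\<And>s. s \<in> S \<Longrightarrow> homog_poly k (f s)"
  shows "homog_poly k (\<lambda>x. \<Sum>s\<in>S. f s x)"
  using assms by (induction S rule: finite_induct) (auto intro: homog_poly_zero homog_poly_add)

lemma homog_poly_pow:
  assumes "homog_poly k f"
  shows "homog_poly (k * m) (\<lambda>x. f x ^ m)"
proof (induction m)
  case 0 then show ?case using homog_poly_const[of 1] by simp
next
  case (Suc m)
  from homog_poly_mult[OF assms Suc] show ?case by (simp add: add.commute)
qed

lemma homog_poly_lin: "homog_poly 1 (\<lambda>x::real^'d. a \<bullet> x)"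
proof -
  have "homog_poly 1 (\<lambda>x::real^'d. \<Sum>i\<in>UNIV. a $ i * x $ i)"
    by (rule homog_poly_sum, simp, rule homog_poly_scale, rule homog_poly_var)
  then show ?thesis by (simp add: inner_vec_def)
qed



lemma homog_poly_prod:
  assumes "finite S" "\<And>s. s \<in> S \<Longrightarrow> homog_poly (k s) (f s)"
  shows "homog_poly (\<Sum>s\<in>S. k s) (\<lambda>x. \<Prod>s\<in>S. f s x)"
  using assms
proof (induction S rule: finite_induct)
  case empty then show ?case using homog_poly_const[of 1] by simp
next
  case (insert s S)
  then show ?case using homog_poly_mult[of "k s" "f s" "sum k S" "\<lambda>x. \<Prod>s\<in>S. f s x"] by simp
qed

lemma homog_poly_comp:
  assumes "homog_poly k f"
  shows "homog_poly k (\<lambda>x. f (M *v x))"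
proof -
  obtain c where c: "\<And>x. f x = (\<Sum>\<alpha>\<in>{\<alpha>. sum \<alpha> UNIV = k}. c \<alpha> * mnm \<alpha> x)"
    using assms unfolding homog_poly_alt by blast
  have "homog_poly k (\<lambda>x. \<Sum>\<alpha>\<in>{\<alpha>. sum \<alpha> UNIV = k}. c \<alpha> * mnm \<alpha> (M *v x))"
  proof (rule homog_poly_sum, simp add: fin_deg)
    fix \<alpha> :: "'a \<Rightarrow> nat" assume "\<alpha> \<in> {\<alpha>. sum \<alpha> UNIV = k}"
    then have s: "sum \<alpha> UNIV = k" by simp
    have "homog_poly (\<Sum>i\<in>UNIV. 1 * \<alpha> i) (\<lambda>x. \<Prod>i\<in>UNIV. (M $ i \<bullet> x) ^ \<alpha> i)"
      by (rule homog_poly_prod, simp, rule homog_poly_pow, rule homog_poly_lin)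
    then have "homog_poly k (\<lambda>x. mnm \<alpha> (M *v x))"
      using s by (simp add: mnm_def matrix_vector_mul_component)
    then show "homog_poly k (\<lambda>x. c \<alpha> * mnm \<alpha> (M *v x))" by (rule homog_poly_scale)
  qed
  then show ?thesis by (simp add: c)
qed

lemma orth_norm: "orthogonal_matrix V \<Longrightarrow> norm (V *v x) = norm (x::real^'n)"
  by (metis matrix_of_matrix_vector_mul matrix_vector_mul_linear orthogonal_transformation_matrix
      orthogonal_transformation_norm)

lemma G_reindex_right:
  assumes "finite_orth_group G" "W \<in> G"
  shows "(\<Sum>U\<in>G. h (U ** W)) = (\<Sum>U\<in>G. h U)"
proof (rule sum.reindex_bij_witness[of _ "\<lambda>U. U ** transpose W" "\<lambda>U. U ** W"])
  have o: "orthogonal_matrix W" using assms unfolding finite_orth_group_def by blast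
  then have w1: "W ** transpose W = mat 1" "transpose W ** W = mat 1"
    unfolding orthogonal_matrix_def by auto
  fix U assume U: "U \<in> G"
  show "U ** transpose W ** W = U" by (simp add: matrix_mul_assoc[symmetric] w1)
  show "U ** transpose W \<in> G" using assms U unfolding finite_orth_group_def by blast
  show "U ** W ** transpose W = U" by (simp add: matrix_mul_assoc[symmetric] w1)
  show "U ** W \<in> G" using assms U unfolding finite_orth_group_def by blast
  show "h (U ** W) = h (U ** W)" ..
qed

lemma G_reindex_transpose:
  assumes "finite_orth_group G"
  shows "(\<Sum>U\<in>G. h (transpose U)) = (\<Sum>U\<in>G. h U)"
  by (rule sum.reindex_bij_witness[of _ transpose transpose])
     (use assms in \<open>auto simp: finite_orth_group_def\<close>)

lemma G_avg_form:
  fixes G :: "(real^'d^'d) set"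
  assumes G: "finite_orth_group G"
    and hyp: "\<forall>f. homog_poly (2 * p) f \<and> (\<forall>U\<in>G. \<forall>x. f (U *v x) = f x)
              \<longrightarrow> (\<exists>c. \<forall>x. f x = c * norm x ^ (2 * p))"
    and hp: "homog_poly (2 * p) \<phi>"
  shows "\<exists>c. \<forall>x. (\<Sum>U\<in>G. \<phi> (U *v x)) = c * norm x ^ (2 * p)"
proof -
  have "homog_poly (2 * p) (\<lambda>x. \<Sum>U\<in>G. \<phi> (U *v x))"
    using G unfolding finite_orth_group_def
    by (intro homog_poly_sum homog_poly_comp hp) auto
  moreover have "\<forall>W\<in>G. \<forall>x. (\<Sum>U\<in>G. \<phi> (U *v (W *v x))) = (\<Sum>U\<in>G. \<phi> (U *v x))"
    using G_reindex_right[OF G, where h = "\<lambda>U. \<phi> (U *v x)" for x]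
    by (simp add: matrix_vector_mul_assoc)
  ultimately show ?thesis using hyp by (rule_tac hyp[rule_format]) auto
qed

lemma kappa_exists:
  fixes G :: "(real^'d^'d) set"
  assumes G: "finite_orth_group G"
    and hyp: "\<forall>f. homog_poly (2 * p) f \<and> (\<forall>U\<in>G. \<forall>x. f (U *v x) = f x)
              \<longrightarrow> (\<exists>c. \<forall>x. f x = c * norm x ^ (2 * p))"
  shows "\<exists>\<kappa>. \<forall>x y. (\<Sum>U\<in>G. (y \<bullet> (U *v x)) ^ (2 * p)) = \<kappa> * norm y ^ (2 * p) * norm x ^ (2 * p)"
proof -
  have "\<forall>y. \<exists>c. \<forall>x. (\<Sum>U\<in>G. (y \<bullet> (U *v x)) ^ (2 * p)) = c * norm x ^ (2 * p)"
  proof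
    fix y :: "real^'d"
    have "homog_poly (1 * (2 * p)) (\<lambda>z. (y \<bullet> z) ^ (2 * p))"
      by (rule homog_poly_pow, rule homog_poly_lin)
    then show "\<exists>c. \<forall>x. (\<Sum>U\<in>G. (y \<bullet> (U *v x)) ^ (2 * p)) = c * norm x ^ (2 * p)"
      using G_avg_form[OF G hyp, of "\<lambda>z. (y \<bullet> z) ^ (2 * p)"] by simp
  qed
  then obtain c where c: "\<And>x y. (\<Sum>U\<in>G. (y \<bullet> (U *v x)) ^ (2 * p)) = c y * norm x ^ (2 * p)"
    by metis
  have sym: "c y * norm x ^ (2 * p) = c x * norm y ^ (2 * p)" for x y
  proof -
    have "c y * norm x ^ (2 * p) = (\<Sum>U\<in>G. (y \<bullet> (transpose U *v x)) ^ (2 * p))"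
      using G_reindex_transpose[OF G, where h = "\<lambda>U. (y \<bullet> (U *v x)) ^ (2 * p)"] c by simp
    also have "\<dots> = (\<Sum>U\<in>G. (x \<bullet> (U *v y)) ^ (2 * p))"
      by (intro sum.cong refl) (metis dot_lmul_matrix inner_commute transpose_matrix_vector)
    finally show ?thesis using c by simp
  qed
  define e :: "real^'d" where "e = axis undefined 1"
  have ne: "norm e = 1" by (simp add: e_def)
  show ?thesis
  proof (intro exI allI)
    fix x y :: "real^'d"
    have "c y = c e * norm y ^ (2 * p)" using sym[of y e] ne by simp
    then show "(\<Sum>U\<in>G. (y \<bullet> (U *v x)) ^ (2 * p)) = c e * norm y ^ (2 * p) * norm x ^ (2 * p)"
      using c by simp
  qed
qed

lemma expand_bin:
  fixes P \<alpha> \<beta> :: "'a \<Rightarrow> real"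
  shows "(\<Sum>U\<in>G. P U * (\<alpha> U + t * \<beta> U) ^ N) =
   (\<Sum>i\<le>N. (of_nat (N choose i) * (\<Sum>U\<in>G. P U * \<beta> U ^ i * \<alpha> U ^ (N - i))) * t ^ i)"
proof -
  have "(\<Sum>U\<in>G. P U * (\<alpha> U + t * \<beta> U) ^ N) =
        (\<Sum>U\<in>G. \<Sum>i\<le>N. P U * (of_nat (N choose i) * (t * \<beta> U) ^ i * \<alpha> U ^ (N - i)))"
  proof (rule sum.cong[OF refl])
    fix U
    have "(\<alpha> U + t * \<beta> U) ^ N = (t * \<beta> U + \<alpha> U) ^ N" by (simp add: add.commute)
    also have "\<dots> = (\<Sum>i\<le>N. of_nat (N choose i) * (t * \<beta> U) ^ i * \<alpha> U ^ (N - i))"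
      by (rule binomial_ring)
    finally show "P U * (\<alpha> U + t * \<beta> U) ^ N = (\<Sum>i\<le>N. P U * (of_nat (N choose i) * (t * \<beta> U) ^ i * \<alpha> U ^ (N - i)))"
      by (simp add: sum_distrib_left)
  qed
  also have "\<dots> = (\<Sum>i\<le>N. \<Sum>U\<in>G. P U * (of_nat (N choose i) * (t * \<beta> U) ^ i * \<alpha> U ^ (N - i)))"
    by (rule sum.swap)
  also have "\<dots> = (\<Sum>i\<le>N. (of_nat (N choose i) * (\<Sum>U\<in>G. P U * \<beta> U ^ i * \<alpha> U ^ (N - i))) * t ^ i)"
    by (intro sum.cong refl) (simp add: sum_distrib_left sum_distrib_right power_mult_distrib algebra_simps)
  finally show ?thesis .
qed



lemma inv_prod:
  fixes G :: "(real^'d^'d) set" and V :: "real^'d^'d" and m :: nat and e :: "nat \<Rightarrow> nat" and v :: "nat \<Rightarrow> real^'d"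
  assumes K: "\<forall>x y. (\<Sum>U\<in>G. (y \<bullet> (U *v x)) ^ (2 * p)) = \<kappa> * norm y ^ (2 * p) * norm x ^ (2 * p)"
    and V: "orthogonal_matrix V" and p: "p \<ge> 1"
  shows "(\<Sum>j<m. e j) = 2 * p \<Longrightarrow>
    (\<Sum>U\<in>G. \<Prod>j<m. ((V *v v j) \<bullet> (U *v x)) ^ e j) = (\<Sum>U\<in>G. \<Prod>j<m. (v j \<bullet> (U *v x)) ^ e j)"
proof (induction m arbitrary: v e rule: less_induct)
  case (less m)
  consider "m = 0" | "m = 1" | k where "m = Suc (Suc k)"
    by (metis One_nat_def not0_implies_Suc)
  then show ?case
  proof cases
    case 1 then show ?thesis using less.prems p by simp
  next
    case 2
    then have e0: "e 0 = 2 * p" using less.prems by simp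
    show ?thesis using 2 e0 K orth_norm[OF V] by simp
  next
    case 3
    let ?N = "e k + e (Suc k)"
    let ?P = "\<lambda>U. \<Prod>j<k. (v j \<bullet> (U *v x)) ^ e j"
    let ?P' = "\<lambda>U. \<Prod>j<k. ((V *v v j) \<bullet> (U *v x)) ^ e j"
    let ?a = "\<lambda>U. v k \<bullet> (U *v x)" and ?b = "\<lambda>U. v (Suc k) \<bullet> (U *v x)"
    let ?a' = "\<lambda>U. (V *v v k) \<bullet> (U *v x)" and ?b' = "\<lambda>U. (V *v v (Suc k)) \<bullet> (U *v x)"
    have sk: "(\<Sum>j<k. e j) + ?N = 2 * p" using less.prems 3 by simp
    have eqt: "(\<Sum>U\<in>G. ?P' U * (?a' U + t * ?b' U) ^ ?N) = (\<Sum>U\<in>G. ?P U * (?a U + t * ?b U) ^ ?N)" for t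
    proof -
      define w where "w = v(k := v k + t *\<^sub>R v (Suc k))"
      define e' where "e' = e(k := ?N)"
      have s1: "(\<Sum>j<Suc k. e' j) = 2 * p" using sk by (simp add: e'_def)
      have IH: "(\<Sum>U\<in>G. \<Prod>j<Suc k. ((V *v w j) \<bullet> (U *v x)) ^ e' j) = (\<Sum>U\<in>G. \<Prod>j<Suc k. (w j \<bullet> (U *v x)) ^ e' j)"
        using less.IH[of "Suc k" e' w] s1 3 by simp
      have l: "(\<Prod>j<Suc k. ((V *v w j) \<bullet> (U *v x)) ^ e' j) = ?P' U * (?a' U + t * ?b' U) ^ ?N" for U
        by (simp add: w_def e'_def matrix_vector_right_distrib inner_add_left matrix_vector_mult_scaleR)
      have r: "(\<Prod>j<Suc k. (w j \<bullet> (U *v x)) ^ e' j) = ?P U * (?a U + t * ?b U) ^ ?N" for U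
        by (simp add: w_def e'_def inner_add_left)
      show ?thesis using IH l r by simp
    qed
    have "\<forall>t. (\<Sum>i\<le>?N. (of_nat (?N choose i) * (\<Sum>U\<in>G. ?P' U * ?b' U ^ i * ?a' U ^ (?N - i))) * t ^ i)
          = (\<Sum>i\<le>?N. (of_nat (?N choose i) * (\<Sum>U\<in>G. ?P U * ?b U ^ i * ?a U ^ (?N - i))) * t ^ i)"
      using eqt by (simp add: expand_bin)
    then have "of_nat (?N choose e (Suc k)) * (\<Sum>U\<in>G. ?P' U * ?b' U ^ e (Suc k) * ?a' U ^ (?N - e (Suc k)))
        = of_nat (?N choose e (Suc k)) * (\<Sum>U\<in>G. ?P U * ?b U ^ e (Suc k) * ?a U ^ (?N - e (Suc k)))"
      unfolding polyfun_eq_coeffs by (erule_tac x="e (Suc k)" in allE) simp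
    then have "(\<Sum>U\<in>G. ?P' U * ?b' U ^ e (Suc k) * ?a' U ^ e k)
        = (\<Sum>U\<in>G. ?P U * ?b U ^ e (Suc k) * ?a U ^ e k)"
      by simp
    then show ?thesis using 3 by (simp add: ac_simps)
  qed
qed



lemma power_sum_expand:
  fixes a :: "'k \<Rightarrow> real"
  assumes "finite K"
  shows "(\<Sum>k\<in>K. a k) ^ p = (\<Sum>g\<in>PiE {..<p} (\<lambda>_. K). \<Prod>j<p. a (g j))"
proof -
  have "(\<Sum>k\<in>K. a k) ^ p = (\<Prod>j<p. \<Sum>k\<in>K. a k)" by simp
  also have "\<dots> = (\<Sum>g\<in>PiE {..<p} (\<lambda>_. K). \<Prod>j<p. a (g j))"
    by (rule prod_sum_PiE) (use assms in auto)
  finally show ?thesis .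
qed

lemma phi_inv:
  fixes G :: "(real^'d^'d) set" and V :: "real^'d^'d" and w :: "'k \<Rightarrow> real^'d"
  assumes K: "\<forall>x y. (\<Sum>U\<in>G. (y \<bullet> (U *v x)) ^ (2 * p)) = \<kappa> * norm y ^ (2 * p) * norm x ^ (2 * p)"
    and V: "orthogonal_matrix V" and p: "p \<ge> 1" and fin: "finite S"
  shows "(\<Sum>U\<in>G. (\<Sum>k\<in>S. s k * ((V *v w k) \<bullet> (U *v x))\<^sup>2) ^ p)
       = (\<Sum>U\<in>G. (\<Sum>k\<in>S. s k * (w k \<bullet> (U *v x))\<^sup>2) ^ p)"
proof -
  have ex: "(\<Sum>U\<in>G. (\<Sum>k\<in>S. s k * (u k \<bullet> (U *v x))\<^sup>2) ^ p) =
     (\<Sum>g\<in>PiE {..<p} (\<lambda>_. S). (\<Prod>j<p. s (g j)) * (\<Sum>U\<in>G. \<Prod>j<p. (u (g j) \<bullet> (U *v x)) ^ 2))"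
    for u :: "'k \<Rightarrow> real^'d"
  proof -
    have "(\<Sum>U\<in>G. (\<Sum>k\<in>S. s k * (u k \<bullet> (U *v x))\<^sup>2) ^ p) =
          (\<Sum>U\<in>G. \<Sum>g\<in>PiE {..<p} (\<lambda>_. S). (\<Prod>j<p. s (g j)) * (\<Prod>j<p. (u (g j) \<bullet> (U *v x)) ^ 2))"
      by (simp add: power_sum_expand[OF fin] prod.distrib)
    also have "\<dots> = (\<Sum>g\<in>PiE {..<p} (\<lambda>_. S). \<Sum>U\<in>G. (\<Prod>j<p. s (g j)) * (\<Prod>j<p. (u (g j) \<bullet> (U *v x)) ^ 2))"
      by (rule sum.swap)
    also have "\<dots> = (\<Sum>g\<in>PiE {..<p} (\<lambda>_. S). (\<Prod>j<p. s (g j)) * (\<Sum>U\<in>G. \<Prod>j<p. (u (g j) \<bullet> (U *v x)) ^ 2))"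
      by (simp add: sum_distrib_left)
    finally show ?thesis .
  qed
  have "(\<Sum>U\<in>G. \<Prod>j<p. ((V *v w (g j)) \<bullet> (U *v x)) ^ 2) = (\<Sum>U\<in>G. \<Prod>j<p. (w (g j) \<bullet> (U *v x)) ^ 2)" for g
    using inv_prod[OF K V p, where m = p and e = "\<lambda>_. 2" and v = "\<lambda>j. w (g j)" and x = x] by (simp add: mult.commute)
  then show ?thesis unfolding ex[of w] ex[of "\<lambda>k. V *v w k"] by simp
qed



lemma compact_orth: "compact {V::real^'n^'n. orthogonal_matrix V}"
unfolding compact_eq_bounded_closed
proof (rule conjI[rotated])
  have c: "continuous_on UNIV (\<lambda>V::real^'n^'n. transpose V ** V)"
    unfolding matrix_matrix_mult_def transpose_def by (intro continuous_intros)
  have "{V::real^'n^'n. orthogonal_matrix V} = {V. transpose V ** V = mat 1}"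
    by (simp add: orthogonal_matrix)
  moreover have "closed {V::real^'n^'n. transpose V ** V = mat 1}"
    by (rule closed_Collect_eq[OF c continuous_on_const])
  ultimately show "closed {V::real^'n^'n. orthogonal_matrix V}" by simp
  show "bounded {V::real^'n^'n. orthogonal_matrix V}"
    unfolding bounded_iff
  proof (intro exI ballI)
    fix V :: "real^'n^'n" assume "V \<in> {V. orthogonal_matrix V}"
    then have r: "norm (row i V) = 1" for i by (simp add: orthogonal_matrix_orthonormal_rows)
    have "row i V = V $ i" for i by (simp add: row_def vec_eq_iff)
    then have n1: "norm (V $ i) = 1" for i using r by metis
    have "norm V = L2_set (\<lambda>i. norm (V $ i)) UNIV" by (rule norm_vec_def)
    also have "\<dots> \<le> (\<Sum>i\<in>UNIV. norm (V $ i))" by (rule L2_set_le_sum) auto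
    finally show "norm V \<le> real CARD('n)" using n1 by simp
  qed
qed

lemma sum_two:
  fixes f g :: "'n::finite \<Rightarrow> real"
  assumes "i \<noteq> j"
  shows "(\<Sum>k\<in>UNIV. (if k = i then f k else if k = j then g k else 0)) = f i + g j"
proof -
  have "(\<Sum>k\<in>UNIV. (if k = i then f k else if k = j then g k else 0))
      = (\<Sum>k\<in>UNIV. (if k = i then f k else 0) + (if k = j then g k else 0))"
    by (rule sum.cong) (use assms in auto)
  also have "\<dots> = f i + g j" by (simp add: sum.distrib)
  finally show ?thesis .
qed

definition givens :: "'n \<Rightarrow> 'n \<Rightarrow> real \<Rightarrow> real \<Rightarrow> real^'n^'n" where
  "givens i j c s = (\<chi> k a. if a = i then (if k = i then c else if k = j then s else 0)
     else if a = j then (if k = i then - s else if k = j then c else 0)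
     else if k = a then 1 else 0)"

lemma givens_col:
  fixes X :: "'n::finite \<Rightarrow> real"
  assumes "i \<noteq> j"
  shows "(\<Sum>k\<in>UNIV. givens i j c s $ k $ a * X k) =
    (if a = i then c * X i + s * X j else if a = j then - s * X i + c * X j else X a)"
proof -
  consider "a = i" | "a = j" | "a \<noteq> i" "a \<noteq> j" by blast
  then show ?thesis
  proof cases
    case 1
    have "(\<Sum>k\<in>UNIV. givens i j c s $ k $ a * X k) = (\<Sum>k\<in>UNIV. (if k = i then c * X k else if k = j then s * X k else 0))"
      by (rule sum.cong) (auto simp: givens_def 1)
    then show ?thesis using assms 1 by (simp add: sum_two)
  next
    case 2
    have "(\<Sum>k\<in>UNIV. givens i j c s $ k $ a * X k) = (\<Sum>k\<in>UNIV. (if k = i then - s * X k else if k = j then c * X k else 0))"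
      by (rule sum.cong) (use assms in \<open>auto simp: givens_def 2\<close>)
    then show ?thesis using assms 2 by (simp add: sum_two)
  next
    case 3
    have "(\<Sum>k\<in>UNIV. givens i j c s $ k $ a * X k) = (\<Sum>k\<in>UNIV. (if k = a then X k else 0))"
      by (rule sum.cong) (use 3 in \<open>auto simp: givens_def\<close>)
    then show ?thesis using 3 by simp
  qed
qed

lemma givens_orth:
  assumes "i \<noteq> j" "c\<^sup>2 + s\<^sup>2 = 1"
  shows "orthogonal_matrix (givens i j c s)"
  unfolding orthogonal_matrix
proof -
  have "(transpose (givens i j c s) ** givens i j c s) $ a $ b = mat 1 $ a $ b" for a b
  proof -
    have "(transpose (givens i j c s) ** givens i j c s) $ a $ b = (\<Sum>k\<in>UNIV. givens i j c s $ k $ a * givens i j c s $ k $ b)"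
      by (simp add: matrix_matrix_mult_def transpose_def)
    also have "\<dots> = mat 1 $ a $ b"
      unfolding givens_col[OF assms(1)]
      using assms by (auto simp: givens_def mat_def power2_eq_square algebra_simps)
    finally show ?thesis .
  qed
  then show "transpose (givens i j c s) ** givens i j c s = mat 1" by (simp add: vec_eq_iff)
qed

lemma givens_conj_diag:
  fixes B :: "real^'n^'n"
  assumes ij: "i \<noteq> j" and sym: "transpose B = B"
  shows "(transpose (givens i j c s) ** B ** givens i j c s) $ a $ a =
    (if a = i then c\<^sup>2 * B$i$i + 2 * c * s * B$i$j + s\<^sup>2 * B$j$j
     else if a = j then s\<^sup>2 * B$i$i - 2 * c * s * B$i$j + c\<^sup>2 * B$j$j else B$a$a)"
proof -
  have bs: "B$j$i = B$i$j" using sym by (metis transpose_def vec_lambda_beta)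
  have "(transpose (givens i j c s) ** B ** givens i j c s) $ a $ a =
      (\<Sum>l\<in>UNIV. givens i j c s $ l $ a * (\<Sum>k\<in>UNIV. givens i j c s $ k $ a * B$k$l))"
    by (simp add: matrix_matrix_mult_def transpose_def mult.commute)
  also have "\<dots> = (if a = i then c\<^sup>2 * B$i$i + 2 * c * s * B$i$j + s\<^sup>2 * B$j$j
     else if a = j then s\<^sup>2 * B$i$i - 2 * c * s * B$i$j + c\<^sup>2 * B$j$j else B$a$a)"
    unfolding givens_col[OF ij] using ij bs
    by (simp add: power2_eq_square algebra_simps)
  finally show ?thesis .
qed

lemma rot_identity:
  fixes c s x y b :: real
  shows "(c\<^sup>2 * x + 2 * c * s * b + s\<^sup>2 * y)\<^sup>2 + (s\<^sup>2 * x - 2 * c * s * b + c\<^sup>2 * y)\<^sup>2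
     + 2 * ((c\<^sup>2 - s\<^sup>2) * b + c * s * (y - x))\<^sup>2 = (c\<^sup>2 + s\<^sup>2)\<^sup>2 * (x\<^sup>2 + y\<^sup>2 + 2 * b\<^sup>2)"
  by algebra

lemma rot_exists:
  fixes b e :: real
  assumes "b \<noteq> 0"
  shows "\<exists>c s. c\<^sup>2 + s\<^sup>2 = 1 \<and> (c\<^sup>2 - s\<^sup>2) * b + c * s * e = 0"
proof -
  define Dq where "Dq = sqrt (e\<^sup>2 + 4 * b\<^sup>2)"
  have Dq2: "Dq\<^sup>2 = e\<^sup>2 + 4 * b\<^sup>2" unfolding Dq_def by simp
  define c0 where "c0 = (Dq - e) / (2 * b)"
  have q: "(c0\<^sup>2 - 1) * b + c0 * e = 0"
  proof -
    have "(c0\<^sup>2 - 1) * b + c0 * e = ((Dq - e)\<^sup>2 - 4 * b\<^sup>2 + 2 * e * (Dq - e)) / (4 * b)"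
      unfolding c0_def using assms by (simp add: field_simps power2_eq_square)
    also have "(Dq - e)\<^sup>2 - 4 * b\<^sup>2 + 2 * e * (Dq - e) = Dq\<^sup>2 - e\<^sup>2 - 4 * b\<^sup>2"
      by (simp add: power2_eq_square algebra_simps)
    finally show ?thesis using Dq2 by simp
  qed
  define N where "N = sqrt (c0\<^sup>2 + 1)"
  have N2: "N\<^sup>2 = c0\<^sup>2 + 1" unfolding N_def by simp
  have Npos: "N > 0" unfolding N_def by (simp add: add_pos_nonneg add.commute[of _ 1] add_pos_nonneg[of 1])
  show ?thesis
  proof (intro exI conjI)
    have pp: "c0\<^sup>2 + 1 \<noteq> 0" by (smt (verit) zero_le_power2)
    have "(c0 / N)\<^sup>2 + (1 / N)\<^sup>2 = (c0\<^sup>2 + 1) / N\<^sup>2" by (simp add: power_divide add_divide_distrib)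
    then show "(c0 / N)\<^sup>2 + (1 / N)\<^sup>2 = 1" using N2 pp by simp
    have "((c0 / N)\<^sup>2 - (1 / N)\<^sup>2) * b + c0 / N * (1 / N) * e = ((c0\<^sup>2 - 1) * b + c0 * e) / N\<^sup>2"
      using Npos by (simp add: power_divide field_simps power2_eq_square)
    then show "((c0 / N)\<^sup>2 - (1 / N)\<^sup>2) * b + c0 / N * (1 / N) * e = 0" using q by simp
  qed
qed

lemma spectral:
  fixes A :: "real^'n^'n"
  assumes symA: "transpose A = A"
  shows "\<exists>V. orthogonal_matrix V \<and> (\<forall>i j. i \<noteq> j \<longrightarrow> (transpose V ** A ** V) $ i $ j = 0)"
proof -
  define D where "D V = (\<Sum>a\<in>UNIV. ((transpose V ** A ** V) $ a $ a)\<^sup>2)" for V :: "real^'n^'n"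
  have cD: "continuous_on {V. orthogonal_matrix V} D"
    unfolding D_def matrix_matrix_mult_def transpose_def by (intro continuous_intros)
  obtain V0 where V0: "orthogonal_matrix V0" and max: "\<And>V. orthogonal_matrix V \<Longrightarrow> D V \<le> D V0"
    using continuous_attains_sup[OF compact_orth _ cD] orthogonal_matrix_id by blast
  define B where "B = transpose V0 ** A ** V0"
  have symB: "transpose B = B"
    unfolding B_def by (simp add: matrix_transpose_mul symA matrix_mul_assoc)
  have "\<forall>i j. i \<noteq> j \<longrightarrow> B $ i $ j = 0"
  proof (rule ccontr)
    assume "\<not> ?thesis"
    then obtain i j where ij: "i \<noteq> j" and b: "B $ i $ j \<noteq> 0" by blast
    obtain c s where cs: "c\<^sup>2 + s\<^sup>2 = 1" and w: "(c\<^sup>2 - s\<^sup>2) * B$i$j + c * s * (B$j$j - B$i$i) = 0"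
      using rot_exists[OF b] by blast
    define R where "R = givens i j c s"
    have oR: "orthogonal_matrix R" unfolding R_def by (rule givens_orth[OF ij cs])
    define V1 where "V1 = V0 ** R"
    have oV1: "orthogonal_matrix V1" unfolding V1_def by (rule orthogonal_matrix_mul[OF V0 oR])
    have tr: "transpose V1 ** A ** V1 = transpose R ** B ** R"
      unfolding V1_def B_def by (simp add: matrix_transpose_mul matrix_mul_assoc)
    let ?P = "c\<^sup>2 * B$i$i + 2 * c * s * B$i$j + s\<^sup>2 * B$j$j"
    let ?Q = "s\<^sup>2 * B$i$i - 2 * c * s * B$i$j + c\<^sup>2 * B$j$j"
    have "D V1 - D V0 = (\<Sum>a\<in>UNIV. ((transpose R ** B ** R) $ a $ a)\<^sup>2 - (B $ a $ a)\<^sup>2)"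
      unfolding D_def tr B_def[symmetric] by (simp add: sum_subtractf)
    also have "\<dots> = (\<Sum>a\<in>UNIV. (if a = i then ?P\<^sup>2 - (B$i$i)\<^sup>2 else if a = j then ?Q\<^sup>2 - (B$j$j)\<^sup>2 else 0))"
      by (rule sum.cong) (auto simp: R_def givens_conj_diag[OF ij symB])
    also have "\<dots> = ?P\<^sup>2 - (B$i$i)\<^sup>2 + (?Q\<^sup>2 - (B$j$j)\<^sup>2)"
      using sum_two[OF ij, of "\<lambda>_. ?P\<^sup>2 - (B$i$i)\<^sup>2" "\<lambda>_. ?Q\<^sup>2 - (B$j$j)\<^sup>2"] by simp
    also have "\<dots> = 2 * (B$i$j)\<^sup>2"
      using rot_identity[of c "B$i$i" s "B$i$j" "B$j$j"] cs w by simp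
    finally have "D V1 - D V0 = 2 * (B$i$j)\<^sup>2" .
    moreover have "(B$i$j)\<^sup>2 > 0" using b by simp
    ultimately have "D V1 > D V0" by linarith
    then show False using max[OF oV1] by simp
  qed
  then show ?thesis using V0 unfolding B_def by blast
qed



lemma match_roots:
  fixes a :: "'i \<Rightarrow> real"
  assumes "finite I"
  shows "\<forall>J (b :: 'j \<Rightarrow> real). finite J \<longrightarrow> (\<Prod>i\<in>I. [:- a i, 1:]) = (\<Prod>j\<in>J. [:- b j, 1:]) \<longrightarrow>
     (\<exists>\<sigma>. bij_betw \<sigma> I J \<and> (\<forall>i\<in>I. a i = b (\<sigma> i)))"
  using assms
proof (induction I rule: finite_induct)
  case empty
  show ?case
  proof (intro allI impI)
    fix J and b :: "'j \<Rightarrow> real"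
    assume fJ: "finite J" and eq: "(\<Prod>i\<in>{}. [:- a i, 1:]) = (\<Prod>j\<in>J. [:- b j, 1:])"
    have "J = {}"
    proof (rule ccontr)
      assume "J \<noteq> {}"
      then obtain k where k: "k \<in> J" by blast
      have "poly (\<Prod>j\<in>J. [:- b j, 1:]) (b k) = 0"
        using fJ k by (auto simp: poly_prod prod_zero_iff)
      then show False using eq by simp
    qed
    then show "\<exists>\<sigma>. bij_betw \<sigma> {} J \<and> (\<forall>i\<in>{}. a i = b (\<sigma> i))" by (simp add: bij_betw_def)
  qed
next
  case (insert i I)
  show ?case
  proof (intro allI impI)
    fix J and b :: "'j \<Rightarrow> real"
    assume fJ: "finite J" and eq: "(\<Prod>i\<in>insert i I. [:- a i, 1:]) = (\<Prod>j\<in>J. [:- b j, 1:])"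
    have "poly (\<Prod>j\<in>J. [:- b j, 1:]) (a i) = 0"
      unfolding eq[symmetric] using insert.hyps by (simp add: poly_prod)
    then obtain k where k: "k \<in> J" "b k = a i"
      using fJ by (auto simp: poly_prod prod_zero_iff)
    have "[:- a i, 1:] * (\<Prod>i\<in>I. [:- a i, 1:]) = [:- a i, 1:] * (\<Prod>j\<in>J - {k}. [:- b j, 1:])"
      using eq insert.hyps prod.remove[OF fJ k(1), of "\<lambda>j. [:- b j, 1:]"] k(2) by simp
    then have "(\<Prod>i\<in>I. [:- a i, 1:]) = (\<Prod>j\<in>J - {k}. [:- b j, 1:])"
      by (rule mult_left_cancel[THEN iffD1, rotated]) simp
    then obtain \<sigma> where s: "bij_betw \<sigma> I (J - {k})" "\<forall>i\<in>I. a i = b (\<sigma> i)"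
      using insert.IH fJ by blast
    show "\<exists>\<sigma>. bij_betw \<sigma> (insert i I) J \<and> (\<forall>i'\<in>insert i I. a i' = b (\<sigma> i'))"
    proof (intro exI conjI)
      show "bij_betw (\<sigma>(i := k)) (insert i I) J"
        using s(1) k(1) insert.hyps(2) unfolding bij_betw_def inj_on_def
        by (auto simp: image_iff)
      show "\<forall>i'\<in>insert i I. a i' = b ((\<sigma>(i := k)) i')"
        using s(2) k(2) insert.hyps(2) by auto
    qed
  qed
qed

lemma match_eigen:
  fixes lam mu :: "real^'n"
  assumes "\<forall>t. (\<Prod>i\<in>UNIV. t - lam $ i) = (\<Prod>i\<in>UNIV. t - mu $ i)"
  shows "\<exists>\<sigma>. \<sigma> permutes (UNIV :: 'n set) \<and> lam = (\<chi> i. mu $ \<sigma> i)"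
proof -
  have "poly (\<Prod>i\<in>UNIV. [:- lam $ i, 1:]) = poly (\<Prod>i\<in>UNIV. [:- mu $ i, 1:])"
    using assms by (simp add: poly_prod fun_eq_iff)
  then have "(\<Prod>i\<in>UNIV. [:- lam $ i, 1:]) = (\<Prod>i\<in>UNIV. [:- mu $ i, 1:])"
    by (simp add: poly_eq_poly_eq_iff)
  then obtain \<sigma> where s: "bij_betw \<sigma> (UNIV::'n set) UNIV" "\<forall>i. lam $ i = mu $ \<sigma> i"
    using match_roots[of "UNIV :: 'n set" "\<lambda>i. lam $ i", rule_format, of UNIV "\<lambda>i. mu $ i"] by auto
  show ?thesis
    using s by (intro exI[of _ \<sigma>]) (auto intro!: bij_imp_permutes simp: vec_eq_iff)
qed



lemma matrix_sub_ldistrib': "(A::real^'n^'m) ** (B - C) = A ** B - A ** C"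
  by (simp add: matrix_matrix_mult_def vec_eq_iff sum_subtractf algebra_simps)

lemma matrix_sub_rdistrib': "((B::real^'n^'m) - C) ** A = B ** A - C ** A"
  by (simp add: matrix_matrix_mult_def vec_eq_iff sum_subtractf algebra_simps)

lemma transpose_dot: "(transpose V *v a) \<bullet> z = a \<bullet> (V *v (z::real^'n))"
  by (simp add: dot_lmul_matrix)

lemma gram_quad: "y \<bullet> (gram n T *v y) = (\<Sum>k<n. (T k \<bullet> y)\<^sup>2)"
proof -
  have "y \<bullet> (gram n T *v y) = (\<Sum>i\<in>UNIV. \<Sum>j\<in>UNIV. \<Sum>k<n. (T k $ i * y $ i) * (T k $ j * y $ j))"
    by (simp add: inner_vec_def matrix_vector_mult_def gram_def sum_distrib_left sum_distrib_right ac_simps)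
  also have "\<dots> = (\<Sum>k<n. \<Sum>i\<in>UNIV. \<Sum>j\<in>UNIV. (T k $ i * y $ i) * (T k $ j * y $ j))"
    by (simp add: sum.swap[of _ "{..<n}"])
  also have "\<dots> = (\<Sum>k<n. (T k \<bullet> y)\<^sup>2)"
    by (simp add: inner_vec_def power2_eq_square sum_product)
  finally show ?thesis .
qed

lemma gram_sym: "transpose (gram n T) = gram n T"
  by (simp add: gram_def transpose_def mult.commute)

lemma diag_quad:
  assumes "\<forall>i j. i \<noteq> j \<longrightarrow> M $ i $ j = 0"
  shows "z \<bullet> (M *v z) = (\<Sum>i\<in>UNIV. M $ i $ i * (z $ i)\<^sup>2)"
proof -
  have "(M *v z) $ i = M $ i $ i * z $ i" for i
  proof -
    have "(M *v z) $ i = (\<Sum>j\<in>UNIV. M $ i $ j * z $ j)" by (simp add: matrix_vector_mult_def)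
    also have "\<dots> = (\<Sum>j\<in>UNIV. if j = i then M $ i $ j * z $ j else 0)"
      by (rule sum.cong) (use assms in auto)
    finally show ?thesis by simp
  qed
  then show ?thesis by (simp add: inner_vec_def power2_eq_square ac_simps)
qed

lemma perm_matrix:
  assumes "\<tau> permutes (UNIV :: 'n set)"
  defines "P \<equiv> (\<chi> a b. if a = \<tau> b then 1 else 0) :: real^'n^'n"
  shows "orthogonal_matrix P" "P *v axis i 1 = axis (\<tau> i) 1"
proof -
  have inj: "\<tau> b = \<tau> c \<longleftrightarrow> b = c" for b c using assms(1) by (metis permutes_inj injD)
  have "(transpose P ** P) $ b $ c = mat 1 $ b $ c" for b c
  proof -
    have "(transpose P ** P) $ b $ c = (\<Sum>k\<in>UNIV. (if k = \<tau> b then 1 else 0) * (if k = \<tau> c then 1 else 0))"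
      by (simp add: P_def matrix_matrix_mult_def transpose_def)
    also have "\<dots> = (\<Sum>k\<in>UNIV. if k = \<tau> b then (if \<tau> b = \<tau> c then 1 else 0) else 0)"
      by (rule sum.cong) auto
    finally show ?thesis by (simp add: inj mat_def)
  qed
  then show "orthogonal_matrix P" unfolding orthogonal_matrix by (simp add: vec_eq_iff)
  have "(P *v axis i 1) $ a = axis (\<tau> i) 1 $ a" for a
  proof -
    have "(P *v axis i 1) $ a = (\<Sum>b\<in>UNIV. (if a = \<tau> b then 1 else 0) * (if b = i then 1 else 0))"
      by (simp add: P_def matrix_vector_mult_def axis_def)
    also have "\<dots> = (\<Sum>b\<in>UNIV. if b = i then (if a = \<tau> i then 1 else 0) else 0)"
      by (rule sum.cong) auto
    finally show ?thesis by (simp add: axis_def)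
  qed
  then show "P *v axis i 1 = axis (\<tau> i) 1" by (simp add: vec_eq_iff)
qed

lemma char_diag:
  fixes A V :: "real^'n^'n"
  assumes oV: "orthogonal_matrix V" and off: "\<forall>i j. i \<noteq> j \<longrightarrow> (transpose V ** A ** V) $ i $ j = 0"
  shows "det (t *\<^sub>R mat 1 - A) = (\<Prod>i\<in>UNIV. t - (transpose V ** A ** V) $ i $ i)"
proof -
  let ?M = "transpose V ** A ** V"
  have vv: "transpose V ** V = mat 1" using oV by (simp add: orthogonal_matrix)
  have "transpose V ** (t *\<^sub>R mat 1 - A) ** V = t *\<^sub>R mat 1 - ?M"
    by (simp add: matrix_sub_ldistrib' matrix_sub_rdistrib' matrix_scalar_ac scalar_matrix_assoc[symmetric] vv)
  then have "det (t *\<^sub>R mat 1 - ?M) = det (transpose V) * det (t *\<^sub>R mat 1 - A) * det V"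
    by (metis det_mul)
  also have "\<dots> = det (t *\<^sub>R mat 1 - A) * (det V * det V)" by (simp add: ac_simps)
  also have "det V * det V = 1" using det_orthogonal_matrix[OF oV] by auto
  finally have e: "det (t *\<^sub>R mat 1 - ?M) = det (t *\<^sub>R mat 1 - A)" by simp
  have "det (t *\<^sub>R mat 1 - ?M) = (\<Prod>i\<in>UNIV. (t *\<^sub>R mat 1 - ?M) $ i $ i)"
    by (rule det_diagonal) (use off in \<open>simp add: mat_def\<close>)
  then show ?thesis using e by (simp add: mat_def)
qed

theorem corollary3p4:
  fixes G :: "(real^'d^'d) set" and p :: nat
  assumes "finite_orth_group G"
    and "p \<ge> 1"
    and "\<forall>f. homog_poly (2 * p) f \<and> (\<forall>U\<in>G. \<forall>x. f (U *v x) = f x)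
              \<longrightarrow> (\<exists>c. \<forall>x. f x = c * norm x ^ (2 * p))"
  shows "\<exists>F :: real^'d \<Rightarrow> real. homog_poly p F \<and> symmetric_fun F \<and>
           (\<forall>(n::nat) (T :: nat \<Rightarrow> real^'d) (x :: real^'d) lam.
              is_eigenvalue_list (gram n T) lam \<longrightarrow>
              (1 / real (card G)) * (\<Sum>U\<in>G. rect_norm n T (U *v x) ^ (2 * p))
                = F lam * norm x ^ (2 * p))"
proof -
  note G = assms(1) and p1 = assms(2) and hyp = assms(3)
  have finG: "finite G" and idG: "mat 1 \<in> G" using G unfolding finite_orth_group_def by auto
  have cardG: "card G > 0" using finG idG card_gt_0_iff by blast
  obtain \<kappa> where K: "\<forall>x y. (\<Sum>U\<in>G. (y \<bullet> (U *v x)) ^ (2 * p)) = \<kappa> * norm y ^ (2 * p) * norm x ^ (2 * p)"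
    using kappa_exists[OF G hyp] by blast
  define e0 :: "real^'d" where "e0 = axis undefined 1"
  have ne0: "norm e0 = 1" by (simp add: e0_def)
  define Dl where "Dl lm x = (\<Sum>U\<in>G. (\<Sum>i\<in>UNIV. lm $ i * ((U *v x) $ i)\<^sup>2) ^ p)" for lm and x :: "real^'d"
  define F where "F lm = (1 / real (card G)) * Dl lm e0" for lm
  have Dl_form: "Dl lm x = real (card G) * F lm * norm x ^ (2 * p)" for lm x
  proof -
    have hq: "homog_poly 2 (\<lambda>z::real^'d. \<Sum>i\<in>UNIV. lm $ i * (z $ i)\<^sup>2)"
    proof (rule homog_poly_sum, simp)
      fix i
      have "homog_poly (1 + 1) (\<lambda>z::real^'d. lm $ i * (z $ i * z $ i))"
        by (rule homog_poly_scale[OF homog_poly_mult[OF homog_poly_var homog_poly_var]])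
      then show "homog_poly 2 (\<lambda>z::real^'d. lm $ i * (z $ i)\<^sup>2)" by (simp only: power2_eq_square one_add_one)
    qed
    have "homog_poly (2 * p) (\<lambda>z::real^'d. (\<Sum>i\<in>UNIV. lm $ i * (z $ i)\<^sup>2) ^ p)"
      by (rule homog_poly_pow[OF hq])
    then obtain c where c: "\<And>x. Dl lm x = c * norm x ^ (2 * p)"
      using G_avg_form[OF G hyp] unfolding Dl_def by blast
    have "c = real (card G) * F lm" using c[of e0] ne0 cardG by (simp add: F_def)
    then show ?thesis using c by simp
  qed
  have Dl_rot: "Dl lm x = (\<Sum>U\<in>G. (\<Sum>i\<in>UNIV. lm $ i * ((W *v axis i 1) \<bullet> (U *v x))\<^sup>2) ^ p)"
    if oW: "orthogonal_matrix W" for W lm x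
  proof -
    have "(\<Sum>U\<in>G. (\<Sum>i\<in>UNIV. lm $ i * ((W *v axis i 1) \<bullet> (U *v x))\<^sup>2) ^ p)
        = (\<Sum>U\<in>G. (\<Sum>i\<in>UNIV. lm $ i * (axis i 1 \<bullet> (U *v x))\<^sup>2) ^ p)"
      by (rule phi_inv[OF K oW p1]) simp
    then show ?thesis by (simp add: Dl_def inner_axis')
  qed
  have sym: "symmetric_fun F"
    unfolding symmetric_fun_def
  proof (intro allI impI)
    fix \<sigma> and v :: "real^'d"
    assume s: "\<sigma> permutes (UNIV :: 'd set)"
    then have si: "inv \<sigma> permutes (UNIV :: 'd set)" by (rule permutes_inv)
    define P :: "real^'d^'d" where "P = (\<chi> a b. if a = inv \<sigma> b then 1 else 0)"
    have oP: "orthogonal_matrix P" and Pa: "\<And>i. P *v axis i 1 = axis (inv \<sigma> i) 1"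
      using perm_matrix[OF si] unfolding P_def by auto
    have "Dl (\<chi> i. v $ \<sigma> i) e0 = Dl v e0"
    proof -
      have "Dl v e0 = (\<Sum>U\<in>G. (\<Sum>i\<in>UNIV. v $ i * ((U *v e0) $ (inv \<sigma> i))\<^sup>2) ^ p)"
        using Dl_rot[OF oP, of v e0] by (simp add: Pa inner_axis')
      also have "\<dots> = Dl (\<chi> i. v $ \<sigma> i) e0"
        unfolding Dl_def
      proof (rule sum.cong[OF refl])
        fix U
        have "(\<Sum>i\<in>UNIV. v $ i * ((U *v e0) $ (inv \<sigma> i))\<^sup>2)
            = (\<Sum>i\<in>UNIV. v $ \<sigma> i * ((U *v e0) $ (inv \<sigma> (\<sigma> i)))\<^sup>2)"
          using sum.permute[OF s, of "\<lambda>i. v $ i * ((U *v e0) $ (inv \<sigma> i))\<^sup>2"] by simp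
        also have "\<dots> = (\<Sum>i\<in>UNIV. v $ \<sigma> i * ((U *v e0) $ i)\<^sup>2)"
          using permutes_inverses(2)[OF s] by simp
        finally show "(\<Sum>i\<in>UNIV. v $ i * ((U *v e0) $ (inv \<sigma> i))\<^sup>2) ^ p
            = (\<Sum>i\<in>UNIV. (\<chi> i. v $ \<sigma> i) $ i * ((U *v e0) $ i)\<^sup>2) ^ p" by simp
      qed
      finally show ?thesis by simp
    qed
    then show "F (\<chi> i. v $ \<sigma> i) = F v" by (simp add: F_def)
  qed
  have hom: "homog_poly p F"
  proof -
    have "homog_poly p (\<lambda>lm::real^'d. (1 / real (card G)) *
        (\<Sum>U\<in>G. ((\<chi> i. ((U *v e0) $ i)\<^sup>2) \<bullet> lm) ^ p))"
      using homog_poly_pow[OF homog_poly_lin, where m = p]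
      by (intro homog_poly_scale homog_poly_sum finG) simp
    moreover have "(\<lambda>lm::real^'d. (1 / real (card G)) *
        (\<Sum>U\<in>G. ((\<chi> i. ((U *v e0) $ i)\<^sup>2) \<bullet> lm) ^ p)) = F"
      by (simp add: fun_eq_iff F_def Dl_def inner_vec_def mult.commute)
    ultimately show ?thesis by simp
  qed
  show ?thesis
  proof (intro exI conjI allI impI)
    show "homog_poly p F" by (rule hom)
    show "symmetric_fun F" by (rule sym)
    fix n and T :: "nat \<Rightarrow> real^'d" and x :: "real^'d" and lam
    assume ev: "is_eigenvalue_list (gram n T) lam"
    let ?A = "gram n T"
    obtain V where oV: "orthogonal_matrix V" and off: "\<forall>i j. i \<noteq> j \<longrightarrow> (transpose V ** ?A ** V) $ i $ j = 0"
      using spectral[OF gram_sym] by blast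
    define mu where "mu = (\<chi> i. (transpose V ** ?A ** V) $ i $ i)"
    have "\<forall>t. (\<Prod>i\<in>UNIV. t - lam $ i) = (\<Prod>i\<in>UNIV. t - mu $ i)"
      using ev char_diag[OF oV off] unfolding is_eigenvalue_list_def mu_def by simp
    then obtain \<sigma> where s: "\<sigma> permutes (UNIV :: 'd set)" "lam = (\<chi> i. mu $ \<sigma> i)"
      using match_eigen by blast
    have Flam: "F lam = F mu" using sym s unfolding symmetric_fun_def by simp
    have oVt: "orthogonal_matrix (transpose V)" using oV by simp
    have quad: "(\<Sum>k<n. ((transpose V *v T k) \<bullet> z)\<^sup>2) = (\<Sum>i\<in>UNIV. mu $ i * (z $ i)\<^sup>2)" for z
    proof -
      have "(\<Sum>k<n. ((transpose V *v T k) \<bullet> z)\<^sup>2) = (\<Sum>k<n. (T k \<bullet> (V *v z))\<^sup>2)"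
        by (simp add: dot_lmul_matrix)
      also have "\<dots> = (V *v z) \<bullet> (?A *v (V *v z))" by (rule gram_quad[symmetric])
      also have "\<dots> = z \<bullet> ((transpose V ** ?A ** V) *v z)"
        by (metis inner_commute transpose_dot matrix_vector_mul_assoc)
      also have "\<dots> = (\<Sum>i\<in>UNIV. mu $ i * (z $ i)\<^sup>2)"
        using diag_quad[OF off] by (simp add: mu_def)
      finally show ?thesis .
    qed
    have rn: "rect_norm n T y ^ (2 * p) = (\<Sum>k<n. (T k \<bullet> y)\<^sup>2) ^ p" for y
      by (simp add: rect_norm_def power_mult sum_nonneg)
    have "(\<Sum>U\<in>G. rect_norm n T (U *v x) ^ (2 * p)) = (\<Sum>U\<in>G. (\<Sum>k<n. 1 * (T k \<bullet> (U *v x))\<^sup>2) ^ p)"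
      by (simp add: rn)
    also have "\<dots> = (\<Sum>U\<in>G. (\<Sum>k<n. 1 * ((transpose V *v T k) \<bullet> (U *v x))\<^sup>2) ^ p)"
      by (rule phi_inv[OF K oVt p1, symmetric]) simp
    also have "\<dots> = Dl mu x" unfolding Dl_def mult_1 quad ..
    also have "\<dots> = real (card G) * F lam * norm x ^ (2 * p)" by (simp add: Dl_form Flam)
    finally show "(1 / real (card G)) * (\<Sum>U\<in>G. rect_norm n T (U *v x) ^ (2 * p)) = F lam * norm x ^ (2 * p)"
      using cardG by simp
  qed
qed


end
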